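(* Consider the continuous-time control-affine system $\dot x(t)=f_c(x(t),u(t)):=f(x(t))+\sum_{i=1}^m g_i(x(t))u_i(t)$ with state $x(t)\in\mathbb{R}^n$, input $u(t)\in\mathbb{R}^m$, and $f(0)=0$. Let $\mathbb{X}\subseteq\mathbb{R}^n$ be compact and let $\widehat\Phi:\mathbb{R}^n\to\mathbb{R}^N$ be a continuously differentiable lifting satisfying $\widehat\Phi(0)=0$ and $\|x\|\le\|\widehat\Phi(x)\|\le L_\Phi\|x\|$ for all $x\in\mathbb{X}$ and some $L_\Phi>0$. Let $A\in\mathbb{R}^{N\times N}$, $B_0\in\mathbb{R}^{N\times m}$ and $\tilde B=[B_1-A,\ \dots,\ B_m-A]\in\mathbb{R}^{N\times Nm}$ (with $B_i\in\mathbb{R}^{N\times N}$) be given matrices, and define the residual $$r(x,u):=\nabla\widehat\Phi(x)^\top f_c(x,u)-A\widehat\Phi(x)-B_0u-\tilde B\,(u\otimes\widehat\Phi(x)).$$ Assume there are constants $c_x,c_u>0$ such that $\|r(x,u)\|\le c_x\|\widehat\Phi(x)\|+c_u\|u\|$ for all $x\in\mathbb{X}$ and all $u\in\mathbb{R}^m$. Suppose there exist $\alpha\in\mathbb{N}$, $\beta\in\mathbb{N}_0$ with $\alpha\ge\max\{1,\beta\}$, a symmetric matrix $P\succ0$ of size $N\times N$, a polynomial matrix $L\in\mathbb{R}[z,2\alpha-1]^{m\times N}$, $\tau\in\mathrm{SOS}_+[z,2\beta]$ and $\rho>0$ such that $Q(z)\in\mathrm{SOS}[z,2\alpha]^{2N+m}$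 in the variable $z\in\mathbb{R}^N$, where, with $M(z):=AP+B_0L(z)+\tilde B(L(z)\otimes z)$, $$Q(z)=\begin{bmatrix}-M(z)-M(z)^\top-\rho I_N-\tau(z)I_N & -P & -L(z)^\top\\ -P & \frac{\tau(z)}{2c_x^2}I_N & 0\\ -L(z) & 0 & \frac{\tau(z)}{2c_u^2}I_m\end{bmatrix}.$$ Then the controller $\mu(x)=L(\widehat\Phi(x))P^{-1}\widehat\Phi(x)$ exponentially stabilizes the origin of $\dot x=f_c(x,\mu(x))$ for all initial conditions in $\Omega(c^* )$, where $\Omega(c)=\{x\in\mathbb{R}^n:\widehat\Phi(x)^\top P^{-1}\widehat\Phi(x)\le c\}$ and $c^*=\max\{c>0:\Omega(c)\subseteq\mathbb{X}\}$. (In the paper, the residual bound, and hence the conclusion, holds with probability $1-\delta$ when $A,B_0,B_i$ are obtained from i.i.d. data via the SafEDMD regression.)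
   Context: Notation: $\otimes$ is the Kronecker product. $\mathbb{R}[z,d]$ denotes real polynomials in $z$ of degree at most $d$, and $\mathbb{R}[z,d]^{p\times q}$ the $p\times q$ matrices with entries in $\mathbb{R}[z,d]$. A matrix $S\in\mathbb{R}[z,2d]^{p\times p}$ is SOS, written $S\in\mathrm{SOS}[z,2d]^p$, if $S=T^\top T$ for some $T\in\mathbb{R}[z,d]^{q\times p}$ and some $q\in\mathbb{N}$. It is strictly SOS, written $S\in\mathrm{SOS}_+[z,2d]^p$, if $S-\varepsilon I\in\mathrm{SOS}[z,2d]^p$ for some $\varepsilon>0$; for $p=1$ the superscript is dropped. A feedback $\kappa$ exponentially stabilizes the origin in a set $\mathcal{X}$ if there exist $a,b>0$ such that the closed-loop solution satisfies $\|x(t;\hat x)\|\le a\|\hat x\|e^{-bt}$ for all $\hat x\in\mathcal{X}$ and all $t\ge0$. *)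

theory Defs
  imports "HOL-Analysis.Analysis"
begin

text \<open>A real polynomial of total degree at most d in the N coordinates of z.
  Multi-indices are functions 'N => nat; since 'N is finite, the set of
  multi-indices of total degree at most d is finite.\<close>
definition mpoly_deg :: "nat \<Rightarrow> (real^'N::finite \<Rightarrow> real) \<Rightarrow> bool" where
  "mpoly_deg d p \<longleftrightarrow>
     (\<exists>c :: ('N \<Rightarrow> nat) \<Rightarrow> real.
        p = (\<lambda>z. \<Sum>a\<in>{a::'N \<Rightarrow> nat. (\<Sum>i\<in>UNIV. a i) \<le> d}.
                     c a * (\<Prod>i\<in>UNIV. (z $ i) ^ (a i))))"

text \<open>Scalar SOS: p \<in> SOS[z,2d] iff p = T^T T with T a q x 1 column of
  polynomials of degree at most d.\<close>
definition is_SOS :: "nat \<Rightarrow> (real^'N::finite \<Rightarrow> real) \<Rightarrow> bool" where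
  "is_SOS d p \<longleftrightarrow>
     (\<exists>(q::nat) (T :: nat \<Rightarrow> real^'N \<Rightarrow> real).
        (\<forall>k<q. mpoly_deg d (T k)) \<and> (\<forall>z. p z = (\<Sum>k<q. (T k z)\<^sup>2)))"

definition is_SOS_plus :: "nat \<Rightarrow> (real^'N::finite \<Rightarrow> real) \<Rightarrow> bool" where
  "is_SOS_plus d p \<longleftrightarrow> (\<exists>\<epsilon>>0. is_SOS d (\<lambda>z. p z - \<epsilon>))"

text \<open>Matrix SOS: S \<in> SOS[z,2d]^p iff S = T^T T for some q x p polynomial
  matrix T of degree at most d; the row index set of S is the finite type 'p.\<close>
definition is_SOS_mat :: "nat \<Rightarrow> (real^'N::finite \<Rightarrow> 'p::finite \<Rightarrow> 'p \<Rightarrow> real) \<Rightarrow> bool" where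
  "is_SOS_mat d S \<longleftrightarrow>
     (\<exists>(q::nat) (T :: nat \<Rightarrow> 'p \<Rightarrow> real^'N \<Rightarrow> real).
        (\<forall>k<q. \<forall>i. mpoly_deg d (T k i)) \<and>
        (\<forall>z i j. S z i j = (\<Sum>k<q. T k i z * T k j z)))"

text \<open>u \<otimes> v for u \<in> R^m, v \<in> R^N, indexed by pairs (i,k) (block i, entry k).\<close>
definition kron_vec :: "real^'m::finite \<Rightarrow> real^'N::finite \<Rightarrow> real^('m \<times> 'N)" where
  "kron_vec u v = (\<chi> p. u $ fst p * v $ snd p)"

text \<open>L \<otimes> z for an m x N matrix L and a column vector z \<in> R^N: an (mN) x N matrix.\<close>
definition kron_mat_vec :: "real^'N::finite^'m::finite \<Rightarrow> real^'N \<Rightarrow> real^'N^('m \<times> 'N)" where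
  "kron_mat_vec L z = (\<chi> p. \<chi> j. L $ fst p $ j * z $ snd p)"

text \<open>Btilde = [B_1 - A, ..., B_m - A] as an N x (Nm) matrix, column (i,k) = column k of block i.\<close>
definition Btilde :: "real^'N::finite^'N \<Rightarrow> ('m::finite \<Rightarrow> real^'N^'N) \<Rightarrow> real^('m \<times> 'N)^'N" where
  "Btilde A B = (\<chi> j. \<chi> p. (B (fst p) - A) $ j $ snd p)"

definition fc :: "(real^'n \<Rightarrow> real^'n) \<Rightarrow> ('m::finite \<Rightarrow> real^'n \<Rightarrow> real^'n)
                  \<Rightarrow> real^'n \<Rightarrow> real^'m \<Rightarrow> real^'n" where
  "fc f g x u = f x + (\<Sum>i\<in>UNIV. u $ i *\<^sub>R g i x)"

text \<open>J x is the Jacobian of the lifting at x (an N x n matrix), so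
  nabla Phi(x)^T v = J x *v v.\<close>
definition residual ::
  "(real^'n::finite \<Rightarrow> real^'n) \<Rightarrow> ('m::finite \<Rightarrow> real^'n \<Rightarrow> real^'n)
   \<Rightarrow> (real^'n \<Rightarrow> real^'N::finite) \<Rightarrow> (real^'n \<Rightarrow> real^'n^'N)
   \<Rightarrow> real^'N^'N \<Rightarrow> real^'m^'N \<Rightarrow> ('m \<Rightarrow> real^'N^'N)
   \<Rightarrow> real^'n \<Rightarrow> real^'m \<Rightarrow> real^'N" where
  "residual f g Phi J A B0 B x u =
     J x *v fc f g x u - A *v Phi x - B0 *v u - Btilde A B *v kron_vec u (Phi x)"

definition Mmat ::
  "real^'N::finite^'N \<Rightarrow> real^'m::finite^'N \<Rightarrow> ('m \<Rightarrow> real^'N^'N) \<Rightarrow> real^'N^'N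
   \<Rightarrow> (real^'N \<Rightarrow> real^'N^'m) \<Rightarrow> real^'N \<Rightarrow> real^'N^'N" where
  "Mmat A B0 B P L z = A ** P + B0 ** L z + Btilde A B ** kron_mat_vec (L z) z"

text \<open>The (2N+m) x (2N+m) block matrix Q(z); block rows/columns indexed by
  Inl i (first N block), Inr (Inl i) (second N block), Inr (Inr k) (m block).\<close>
definition Qmat ::
  "real^'N::finite^'N \<Rightarrow> real^'m::finite^'N \<Rightarrow> ('m \<Rightarrow> real^'N^'N) \<Rightarrow> real^'N^'N
   \<Rightarrow> (real^'N \<Rightarrow> real^'N^'m) \<Rightarrow> (real^'N \<Rightarrow> real) \<Rightarrow> real \<Rightarrow> real \<Rightarrow> real
   \<Rightarrow> real^'N \<Rightarrow> ('N + 'N + 'm) \<Rightarrow> ('N + 'N + 'm) \<Rightarrow> real" where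
  "Qmat A B0 B P L tau rho cx cu z r s =
     (let M = Mmat A B0 B P L z in
      case (r, s) of
        (Inl i, Inl j) \<Rightarrow> - M $ i $ j - M $ j $ i - (if i = j then rho + tau z else 0)
      | (Inl i, Inr (Inl j)) \<Rightarrow> - P $ i $ j
      | (Inl i, Inr (Inr k)) \<Rightarrow> - L z $ k $ i
      | (Inr (Inl i), Inl j) \<Rightarrow> - P $ i $ j
      | (Inr (Inl i), Inr (Inl j)) \<Rightarrow> (if i = j then tau z / (2 * cx\<^sup>2) else 0)
      | (Inr (Inl i), Inr (Inr k)) \<Rightarrow> 0
      | (Inr (Inr k), Inl j) \<Rightarrow> - L z $ k $ j
      | (Inr (Inr k), Inr (Inl j)) \<Rightarrow> 0
      | (Inr (Inr k), Inr (Inr l)) \<Rightarrow> (if k = l then tau z / (2 * cu\<^sup>2) else 0))"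

definition pos_def_sym :: "real^'N::finite^'N \<Rightarrow> bool" where
  "pos_def_sym P \<longleftrightarrow> transpose P = P \<and> (\<forall>v. v \<noteq> 0 \<longrightarrow> v \<bullet> (P *v v) > 0)"

definition Omega :: "(real^'n \<Rightarrow> real^'N::finite) \<Rightarrow> real^'N^'N \<Rightarrow> real \<Rightarrow> (real^'n) set" where
  "Omega Phi P c = {x. Phi x \<bullet> (matrix_inv P *v Phi x) \<le> c}"

definition exp_stabilizes :: "(real^'n::finite \<Rightarrow> real^'n) \<Rightarrow> (real^'n) set \<Rightarrow> bool" where
  "exp_stabilizes F S \<longleftrightarrow>
     (\<exists>a>0. \<exists>b>0. \<forall>xh\<in>S. \<forall>x :: real \<Rightarrow> real^'n.
        (x 0 = xh \<and> (\<forall>t\<ge>0. (x has_vector_derivative F (x t)) (at t within {0..})))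
        \<longrightarrow> (\<forall>t\<ge>0. norm (x t) \<le> a * norm xh * exp (- b * t)))"

end

theory Submission
  imports Defs
begin

lemma sum_UNIV_Plus:
  "sum g (UNIV::('a::finite+'b::finite) set) = (\<Sum>i\<in>UNIV. g (Inl i)) + (\<Sum>j\<in>UNIV. g (Inr j))"
  using sum.Plus[of "UNIV::'a set" "UNIV::'b set" g] by (simp add: comp_def)

lemma SOS_mat_psd:
  fixes S :: "real^'N::finite \<Rightarrow> 'p::finite \<Rightarrow> 'p \<Rightarrow> real"
  assumes "is_SOS_mat d S"
  shows "(\<Sum>r\<in>UNIV. \<Sum>s\<in>UNIV. w r * S z r s * w s) \<ge> 0"
proof -
  obtain q :: nat and T where T: "\<And>(z::real^'N) i j. S z i j = (\<Sum>k<q. T k i z * T k j z)"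
    using assms unfolding is_SOS_mat_def by blast
  have "(\<Sum>r\<in>UNIV. \<Sum>s\<in>UNIV. w r * S z r s * w s) = (\<Sum>r\<in>UNIV. \<Sum>s\<in>UNIV. \<Sum>k<q. w r * T k r z * (T k s z * w s))"
    by (simp add: T sum_distrib_left sum_distrib_right mult_ac)
  also have "\<dots> = (\<Sum>k<q. \<Sum>r\<in>UNIV. \<Sum>s\<in>UNIV. w r * T k r z * (T k s z * w s))"
    by (simp add: sum.swap[of _ "{..<q}"])
  also have "\<dots> = (\<Sum>k<q. (\<Sum>r\<in>UNIV. w r * T k r z)\<^sup>2)"
    by (simp add: power2_eq_square sum_product mult_ac)
  also have "\<dots> \<ge> 0" by (simp add: sum_nonneg)
  finally show ?thesis .
qed

lemma quad_diag:
  fixes a :: "real^'a::finite"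
  shows "(\<Sum>i\<in>UNIV. \<Sum>j\<in>UNIV. a$i * (if i = j then c else 0) * a$j) = c * (a \<bullet> a)"
proof -
  have "\<And>i j. a$i * (if i = j then c else 0) * a$j = (if i = j then c * (a$i * a$i) else 0)" by auto
  then show ?thesis by (simp add: inner_vec_def sum_distrib_left)
qed

lemma quad_block1:
  fixes M :: "real^'N::finite^'N" and v :: "real^'N"
  shows "(\<Sum>i\<in>UNIV. \<Sum>j\<in>UNIV. v$i * (- M$i$j - M$j$i - (if i = j then c else 0)) * v$j)
    = -2 * (v \<bullet> (M *v v)) - c * (v \<bullet> v)"
proof -
  have e1: "(\<Sum>i\<in>UNIV. \<Sum>j\<in>UNIV. v$i * M$j$i * v$j) = (\<Sum>i\<in>UNIV. \<Sum>j\<in>UNIV. v$i * M$i$j * v$j)"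
    by (subst sum.swap) (simp add: mult_ac)
  have e2: "v \<bullet> (M *v v) = (\<Sum>i\<in>UNIV. \<Sum>j\<in>UNIV. v$i * M$i$j * v$j)"
    by (simp add: inner_vec_def matrix_vector_mult_def sum_distrib_left mult_ac)
  have e3: "(\<Sum>i\<in>UNIV. \<Sum>j\<in>UNIV. v$i * (if i = j then c else 0) * v$j) = c * (v \<bullet> v)"
    by (rule quad_diag)
  have "(\<Sum>i\<in>UNIV. \<Sum>j\<in>UNIV. v$i * (- M$i$j - M$j$i - (if i = j then c else 0)) * v$j)
     = - (\<Sum>i\<in>UNIV. \<Sum>j\<in>UNIV. v$i * M$i$j * v$j) - (\<Sum>i\<in>UNIV. \<Sum>j\<in>UNIV. v$i * M$j$i * v$j)
       - (\<Sum>i\<in>UNIV. \<Sum>j\<in>UNIV. v$i * (if i = j then c else 0) * v$j)"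
    by (simp add: algebra_simps sum.distrib sum_subtractf sum_negf)
  then show ?thesis using e1 e2 e3 by simp
qed

lemma quad_cross:
  fixes P :: "real^'b::finite^'a::finite" and v :: "real^'a" and a :: "real^'b"
  shows "(\<Sum>i\<in>UNIV. \<Sum>j\<in>UNIV. v$i * (- P$i$j) * a$j) = - (v \<bullet> (P *v a))"
  by (simp add: inner_vec_def matrix_vector_mult_def sum_distrib_left mult_ac sum_negf)

lemma sum9:
  fixes F :: "('a::finite + 'b::finite + 'c::finite) \<Rightarrow> ('a + 'b + 'c) \<Rightarrow> real"
  shows "(\<Sum>r\<in>UNIV. \<Sum>s\<in>UNIV. F r s) =
    (\<Sum>i\<in>UNIV. \<Sum>j\<in>UNIV. F (Inl i) (Inl j)) + (\<Sum>i\<in>UNIV. \<Sum>j\<in>UNIV. F (Inl i) (Inr (Inl j)))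
  + (\<Sum>i\<in>UNIV. \<Sum>j\<in>UNIV. F (Inl i) (Inr (Inr j)))
  + (\<Sum>i\<in>UNIV. \<Sum>j\<in>UNIV. F (Inr (Inl i)) (Inl j)) + (\<Sum>i\<in>UNIV. \<Sum>j\<in>UNIV. F (Inr (Inl i)) (Inr (Inl j)))
  + (\<Sum>i\<in>UNIV. \<Sum>j\<in>UNIV. F (Inr (Inl i)) (Inr (Inr j)))
  + (\<Sum>i\<in>UNIV. \<Sum>j\<in>UNIV. F (Inr (Inr i)) (Inl j)) + (\<Sum>i\<in>UNIV. \<Sum>j\<in>UNIV. F (Inr (Inr i)) (Inr (Inl j)))
  + (\<Sum>i\<in>UNIV. \<Sum>j\<in>UNIV. F (Inr (Inr i)) (Inr (Inr j)))"
  by (simp only: sum_UNIV_Plus sum.distrib add.assoc)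

definition wvec :: "real^'N \<Rightarrow> real^'N \<Rightarrow> real^'m \<Rightarrow> ('N + 'N + 'm) \<Rightarrow> real" where
  "wvec v a b r = (case r of Inl i \<Rightarrow> v$i | Inr (Inl i) \<Rightarrow> a$i | Inr (Inr k) \<Rightarrow> b$k)"

lemma Q_quad:
  fixes P :: "real^'N::finite^'N" and L :: "real^'N \<Rightarrow> real^'N^'m::finite"
  shows "(\<Sum>r\<in>UNIV. \<Sum>s\<in>UNIV. wvec v a b r * Qmat A B0 B P L tau rho cx cu z r s * wvec v a b s)
   = -2 * (v \<bullet> (Mmat A B0 B P L z *v v)) - (rho + tau z) * (v \<bullet> v) - (v \<bullet> (P *v a)) - (a \<bullet> (P *v v))
     - 2 * (b \<bullet> (L z *v v)) + tau z / (2 * cx\<^sup>2) * (a \<bullet> a) + tau z / (2 * cu\<^sup>2) * (b \<bullet> b)"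
proof -
  let ?F = "\<lambda>r s. wvec v a b r * Qmat A B0 B P L tau rho cx cu z r s * wvec v a b s"
  let ?M = "Mmat A B0 B P L z"
  have t1: "(\<Sum>i\<in>UNIV. \<Sum>j\<in>UNIV. ?F (Inl i) (Inl j)) = -2 * (v \<bullet> (?M *v v)) - (rho + tau z) * (v \<bullet> v)"
    unfolding Qmat_def wvec_def Let_def using quad_block1[of v ?M "rho + tau z"] by simp
  have t2: "(\<Sum>i\<in>UNIV. \<Sum>j\<in>UNIV. ?F (Inl i) (Inr (Inl j))) = - (v \<bullet> (P *v a))"
    unfolding Qmat_def wvec_def Let_def using quad_cross[of v P a] by simp
  have t4: "(\<Sum>i\<in>UNIV. \<Sum>j\<in>UNIV. ?F (Inr (Inl i)) (Inl j)) = - (a \<bullet> (P *v v))"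
    unfolding Qmat_def wvec_def Let_def using quad_cross[of a P v] by simp
  have t7: "(\<Sum>i\<in>UNIV. \<Sum>j\<in>UNIV. ?F (Inr (Inr i)) (Inl j)) = - (b \<bullet> (L z *v v))"
    unfolding Qmat_def wvec_def Let_def using quad_cross[of b "L z" v] by simp
  have t3: "(\<Sum>i\<in>UNIV. \<Sum>j\<in>UNIV. ?F (Inl i) (Inr (Inr j))) = - (b \<bullet> (L z *v v))"
  proof -
    have "(\<Sum>i\<in>UNIV. \<Sum>j\<in>UNIV. ?F (Inl i) (Inr (Inr j))) = (\<Sum>j\<in>UNIV. \<Sum>i\<in>UNIV. ?F (Inl i) (Inr (Inr j)))"
      by (rule sum.swap)
    also have "\<dots> = - (b \<bullet> (L z *v v))"
      unfolding Qmat_def wvec_def Let_def using quad_cross[of b "L z" v] by (simp add: mult_ac)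
    finally show ?thesis .
  qed
  have t5: "(\<Sum>i\<in>UNIV. \<Sum>j\<in>UNIV. ?F (Inr (Inl i)) (Inr (Inl j))) = tau z / (2 * cx\<^sup>2) * (a \<bullet> a)"
    unfolding Qmat_def wvec_def Let_def using quad_diag[of a "tau z / (2 * cx\<^sup>2)"] by simp
  have t9: "(\<Sum>i\<in>UNIV. \<Sum>j\<in>UNIV. ?F (Inr (Inr i)) (Inr (Inr j))) = tau z / (2 * cu\<^sup>2) * (b \<bullet> b)"
    unfolding Qmat_def wvec_def Let_def using quad_diag[of b "tau z / (2 * cu\<^sup>2)"] by simp
  have t6: "(\<Sum>i\<in>UNIV. \<Sum>j\<in>UNIV. ?F (Inr (Inl i)) (Inr (Inr j))) = 0"
    unfolding Qmat_def wvec_def Let_def by simp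
  have t8: "(\<Sum>i\<in>UNIV. \<Sum>j\<in>UNIV. ?F (Inr (Inr i)) (Inr (Inl j))) = 0"
    unfolding Qmat_def wvec_def Let_def by simp
  show ?thesis unfolding sum9[of ?F] t1 t2 t3 t4 t5 t6 t7 t8 t9 by simp
qed

lemma sym_inner:
  fixes S :: "real^'n::finite^'n"
  assumes "transpose S = S"
  shows "x \<bullet> (S *v y) = (S *v x) \<bullet> y"
proof -
  have "x v* S = S *v x" using vector_transpose_matrix[of x S] assms by simp
  then show ?thesis using dot_lmul_matrix[of x S y] by simp
qed

lemma kron_eq: "kron_vec (L *v v) z = kron_mat_vec L z *v v"
  by (simp add: vec_eq_iff kron_vec_def kron_mat_vec_def matrix_vector_mult_def sum_distrib_right sum_distrib_left mult_ac)

lemma young2: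
  fixes t n p c :: real
  assumes "t > 0"
  shows "2 * n * (c * p) \<le> t / 2 * n\<^sup>2 + 2 * c\<^sup>2 / t * p\<^sup>2"
proof -
  have "0 \<le> (t * n - 2 * c * p)\<^sup>2 / (2 * t)" using assms by simp
  also have "(t * n - 2 * c * p)\<^sup>2 / (2 * t) = t / 2 * n\<^sup>2 + 2 * c\<^sup>2 / t * p\<^sup>2 - 2 * n * (c * p)"
    using assms by (simp add: field_simps power2_eq_square)
  finally show ?thesis by simp
qed

lemma pointwise_decay:
  fixes P Pi :: "real^'N::finite^'N" and L :: "real^'N \<Rightarrow> real^'N^'m::finite"
    and A :: "real^'N^'N" and B0 :: "real^'m^'N" and B :: "'m \<Rightarrow> real^'N^'N"
    and Jx :: "real^'n::finite^'N" and F :: "real^'n" and z v :: "real^'N"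
  assumes Psym: "transpose P = P"
    and zv: "z = P *v v"
    and res: "norm (Jx *v F - A *v z - B0 *v (L z *v v) - Btilde A B *v kron_vec (L z *v v) z)
              \<le> cx * norm z + cu * norm (L z *v v)"
    and tau_pos: "tau z > 0"
    and cx: "cx > 0" and cu: "cu > 0"
    and Q_sos: "is_SOS_mat alpha (Qmat A B0 B P L tau rho cx cu)"
  shows "2 * (v \<bullet> (Jx *v F)) \<le> - rho * (v \<bullet> v)"
proof -
  define u where "u = L z *v v"
  define M where "M = Mmat A B0 B P L z"
  define r where "r = Jx *v F - A *v z - B0 *v u - Btilde A B *v kron_vec u z"
  define t where "t = tau z"
  have Mv: "M *v v = A *v z + B0 *v u + Btilde A B *v kron_vec u z"
    unfolding M_def Mmat_def u_def zv kron_eq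
    by (simp add: matrix_vector_mult_add_rdistrib matrix_vector_mul_assoc)
  have JF: "Jx *v F = M *v v + r" unfolding r_def Mv by simp
  define a where "a = (2 * cx\<^sup>2 / t) *\<^sub>R z"
  define b where "b = (2 * cu\<^sup>2 / t) *\<^sub>R u"
  have psd: "0 \<le> -2 * (v \<bullet> (M *v v)) - (rho + t) * (v \<bullet> v) - (v \<bullet> (P *v a)) - (a \<bullet> (P *v v))
     - 2 * (b \<bullet> (L z *v v)) + t / (2 * cx\<^sup>2) * (a \<bullet> a) + t / (2 * cu\<^sup>2) * (b \<bullet> b)"
    using SOS_mat_psd[OF Q_sos, of "wvec v a b" z] Q_quad[of v a b A B0 B P L tau rho cx cu z]
    unfolding M_def t_def by simp
  have e1: "v \<bullet> (P *v a) = (2 * cx\<^sup>2 / t) * (z \<bullet> z)"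
    unfolding a_def using sym_inner[OF Psym, of v z] zv
    by (simp add: matrix_vector_mult_scaleR)
  have e2: "a \<bullet> (P *v v) = (2 * cx\<^sup>2 / t) * (z \<bullet> z)"
    unfolding a_def zv by simp
  have e3: "b \<bullet> (L z *v v) = (2 * cu\<^sup>2 / t) * (u \<bullet> u)"
    unfolding b_def u_def by simp
  have e4: "t / (2 * cx\<^sup>2) * (a \<bullet> a) = (2 * cx\<^sup>2 / t) * (z \<bullet> z)"
    unfolding a_def using cx tau_pos t_def by (simp add: field_simps power2_eq_square)
  have e5: "t / (2 * cu\<^sup>2) * (b \<bullet> b) = (2 * cu\<^sup>2 / t) * (u \<bullet> u)"
    unfolding b_def using cu tau_pos t_def by (simp add: field_simps power2_eq_square)
  have psd2: "2 * (v \<bullet> (M *v v)) \<le> - (rho + t) * (norm v)\<^sup>2 - (2 * cx\<^sup>2 / t) * (norm z)\<^sup>2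
      - (2 * cu\<^sup>2 / t) * (norm u)\<^sup>2"
    using psd unfolding e1 e2 e3 e4 e5 by (simp add: power2_norm_eq_inner algebra_simps)
  have rb: "norm r \<le> cx * norm z + cu * norm u" using res unfolding r_def u_def .
  have "v \<bullet> r \<le> norm v * norm r" by (rule norm_cauchy_schwarz)
  also have "\<dots> \<le> norm v * (cx * norm z + cu * norm u)" using rb by (simp add: mult_left_mono)
  finally have vr: "2 * (v \<bullet> r) \<le> 2 * norm v * (cx * norm z) + 2 * norm v * (cu * norm u)"
    by (simp add: algebra_simps)
  have y1: "2 * norm v * (cx * norm z) \<le> t / 2 * (norm v)\<^sup>2 + 2 * cx\<^sup>2 / t * (norm z)\<^sup>2"
    using young2 tau_pos t_def by simp
  have y2: "2 * norm v * (cu * norm u) \<le> t / 2 * (norm v)\<^sup>2 + 2 * cu\<^sup>2 / t * (norm u)\<^sup>2"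
    using young2 tau_pos t_def by simp
  have "2 * (v \<bullet> (Jx *v F)) = 2 * (v \<bullet> (M *v v)) + 2 * (v \<bullet> r)" unfolding JF by (simp add: inner_add_right)
  also have "\<dots> \<le> - rho * (norm v)\<^sup>2" using psd2 vr y1 y2 by (simp add: algebra_simps)
  finally show ?thesis by (simp add: power2_norm_eq_inner)
qed

lemma invariance:
  fixes V D :: "real \<Rightarrow> real"
  assumes deriv: "\<And>t. t \<ge> 0 \<Longrightarrow> (V has_real_derivative D t) (at t within {0..})"
    and neg: "\<And>t. t \<ge> 0 \<Longrightarrow> V t = c \<Longrightarrow> D t < 0"
    and V0: "V 0 \<le> c"
    and t: "t1 \<ge> 0"
  shows "V t1 \<le> c"
proof (rule ccontr)
  assume nt: "\<not> V t1 \<le> c"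
  have cont: "continuous_on {0..t1} V"
    using deriv by (metis DERIV_continuous atLeastAtMost_iff continuous_on_eq_continuous_within
        continuous_within_subset atLeast_iff subsetI)
  define S where "S = {0..t1} \<inter> V -` {..c}"
  have Sc: "closed S" unfolding S_def by (rule continuous_closed_preimage[OF cont]) auto
  have S0: "0 \<in> S" using V0 t unfolding S_def by auto
  have Sb: "bdd_above S" unfolding S_def by (rule bdd_aboveI[of _ t1]) auto
  define t0 where "t0 = Sup S"
  have t0S: "t0 \<in> S" unfolding t0_def using closed_contains_Sup[OF _ Sb Sc] S0 by auto
  have t0ge: "t0 \<ge> 0" using cSup_upper[OF S0 Sb] t0_def by simp
  have Vt0: "V t0 \<le> c" and t0le: "t0 \<le> t1" using t0S unfolding S_def by auto
  have t0lt: "t0 < t1" using t0le Vt0 nt by (cases "t0 = t1") auto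
  have "\<exists>d>0. \<forall>h>0. h < d \<longrightarrow> V (t0 + h) < c"
  proof (cases "V t0 = c")
    case True
    have "D t0 < 0" using neg[OF t0ge True] .
    from has_real_derivative_neg_dec_right[OF deriv[OF t0ge] this]
    obtain d where "d > 0" "\<forall>h>0. t0 + h \<in> {0..} \<longrightarrow> h < d \<longrightarrow> V t0 > V (t0 + h)" by blast
    then show ?thesis using True t0ge by (metis atLeast_iff add_nonneg_nonneg less_eq_real_def)
  next
    case False
    then have lt: "V t0 < c" using Vt0 by simp
    have "(V \<longlongrightarrow> V t0) (at t0 within {0..})"
      using DERIV_continuous[OF deriv[OF t0ge]] by (simp add: continuous_within)
    from order_tendstoD(2)[OF this lt]
    have "eventually (\<lambda>s. V s < c) (at t0 within {0..})" .
    then obtain d where d: "d > 0" "\<And>s. s \<in> {0..} \<Longrightarrow> s \<noteq> t0 \<Longrightarrow> dist s t0 < d \<Longrightarrow> V s < c"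
      unfolding eventually_at by blast
    show ?thesis
    proof (intro exI[of _ d] conjI allI impI)
      fix h :: real assume "h > 0" "h < d"
      then show "V (t0 + h) < c" using d(2)[of "t0 + h"] t0ge by (simp add: dist_real_def)
    qed (use d in auto)
  qed
  then obtain d where d: "d > 0" "\<And>h. h > 0 \<Longrightarrow> h < d \<Longrightarrow> V (t0 + h) < c" by blast
  define s where "s = min (t0 + d / 2) t1"
  have "s - t0 > 0" "s - t0 < d" using d t0lt unfolding s_def by auto
  then have "V s < c" using d(2)[of "s - t0"] by simp
  then have "s \<in> S" unfolding S_def s_def using t0ge d t by auto
  then have "s \<le> t0" unfolding t0_def using Sb by (rule cSup_upper)
  then show False using \<open>s - t0 > 0\<close> by simp
qed

lemma exp_decay:
  fixes V D :: "real \<Rightarrow> real"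
  assumes deriv: "\<And>t. t \<ge> 0 \<Longrightarrow> (V has_real_derivative D t) (at t within {0..})"
    and dec: "\<And>t. t \<ge> 0 \<Longrightarrow> D t \<le> - k * V t"
    and t: "t \<ge> 0"
  shows "V t \<le> V 0 * exp (- k * t)"
proof -
  define W where "W s = V s * exp (k * s)" for s
  have dW: "(W has_real_derivative (D s * exp (k * s) + V s * (exp (k * s) * k))) (at s within {0..t})"
    if "0 \<le> s" "s \<le> t" for s
    unfolding W_def
    by (rule derivative_eq_intros has_field_derivative_subset[OF deriv[OF that(1)]] | simp)+
  have "\<exists>x\<in>{0..t}. W t - W 0 = (\<lambda>h. (D x * exp (k * x) + V x * (exp (k * x) * k)) * h) (t - 0)"
    by (rule mvt_very_simple[OF t]) (use dW in \<open>auto simp: has_field_derivative_def\<close>)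
  then obtain x where x: "x \<in> {0..t}" "W t - W 0 = t * (D x * exp (k * x) + V x * (exp (k * x) * k))"
    by (auto simp: mult.commute)
  have "D x * exp (k * x) + V x * (exp (k * x) * k) = exp (k * x) * (D x + k * V x)" by (simp add: algebra_simps)
  also have "\<dots> \<le> 0" using dec[of x] x(1) by (simp add: mult_nonneg_nonpos)
  finally have "t * (D x * exp (k * x) + V x * (exp (k * x) * k)) \<le> 0" using t by (simp add: mult_nonneg_nonpos)
  then have "W t \<le> W 0" using x(2) by simp
  then have "V t * exp (k * t) \<le> V 0" unfolding W_def by simp
  then have "V t * exp (k * t) * exp (- k * t) \<le> V 0 * exp (- k * t)" by simp
  then show ?thesis by (simp add: exp_minus field_simps)
qed

lemma pd_lower:
  fixes P :: "real^'N::finite^'N"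
  assumes pd: "\<forall>v. v \<noteq> 0 \<longrightarrow> v \<bullet> (P *v v) > 0"
  shows "\<exists>m>0. \<forall>v. v \<bullet> (P *v v) \<ge> m * (v \<bullet> v)"
proof -
  let ?f = "\<lambda>v. v \<bullet> (P *v v)"
  have cont: "continuous_on (sphere 0 1) ?f"
    by (intro continuous_intros continuous_on_id linear_continuous_on matrix_vector_mul_bounded_linear)
  obtain e :: "real^'N" where "norm e = 1" using vector_choose_size[of 1] by auto
  then have ne: "sphere (0::real^'N) 1 \<noteq> {}" by auto
  obtain x0 where x0: "x0 \<in> sphere 0 1" "\<forall>y\<in>sphere 0 1. ?f x0 \<le> ?f y"
    using continuous_attains_inf[OF compact_sphere ne cont] by blast
  have "x0 \<noteq> 0" using x0(1) by auto
  then have m: "?f x0 > 0" using pd by auto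
  show ?thesis
  proof (intro exI[of _ "?f x0"] conjI allI)
    fix v :: "real^'N"
    show "?f x0 * (v \<bullet> v) \<le> ?f v"
    proof (cases "v = 0")
      case True then show ?thesis by simp
    next
      case False
      define w where "w = (1 / norm v) *\<^sub>R v"
      have "w \<in> sphere 0 1" using False unfolding w_def by simp
      then have "?f x0 \<le> ?f w" using x0 by blast
      moreover have "?f w = ?f v / (v \<bullet> v)"
        unfolding w_def by (simp add: matrix_vector_mult_scaleR power2_norm_eq_inner[symmetric] power2_eq_square)
      moreover have "v \<bullet> v > 0" using False by simp
      ultimately show ?thesis by (simp add: field_simps)
    qed
  qed (use m in auto)
qed

lemma pd_inverse:
  fixes P :: "real^'N::finite^'N"
  assumes "pos_def_sym P"
  shows "P ** matrix_inv P = mat 1" "matrix_inv P ** P = mat 1" "transpose (matrix_inv P) = matrix_inv P"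
proof -
  have inj: "inj ((*v) P)"
  proof (rule injI)
    fix x y assume "P *v x = P *v y"
    then have "P *v (x - y) = 0" by (simp add: matrix_vector_mult_diff_distrib)
    then show "x = y" using assms unfolding pos_def_sym_def
      by (metis eq_iff_diff_eq_0 inner_zero_right less_irrefl)
  qed
  then have "invertible P" using matrix_left_invertible_injective invertible_left_inverse by blast
  then have ex: "\<exists>A'. P ** A' = mat 1 \<and> A' ** P = mat 1" unfolding invertible_def .
  show 1: "P ** matrix_inv P = mat 1" "matrix_inv P ** P = mat 1"
    using someI_ex[OF ex] unfolding matrix_inv_def by auto
  have Ps: "transpose P = P" using assms unfolding pos_def_sym_def by simp
  have "transpose (matrix_inv P) ** P = mat 1"
    using arg_cong[OF 1(1), of transpose] Ps by (simp add: matrix_transpose_mul)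
  then have "transpose (matrix_inv P) = transpose (matrix_inv P) ** (P ** matrix_inv P)"
    using 1 by simp
  also have "\<dots> = matrix_inv P"
    by (simp add: matrix_mul_assoc \<open>transpose (matrix_inv P) ** P = mat 1\<close>)
  finally show "transpose (matrix_inv P) = matrix_inv P" .
qed

lemma SOS_nonneg: "is_SOS d p \<Longrightarrow> p z \<ge> 0"
  unfolding is_SOS_def by (auto intro!: sum_nonneg)

lemma SOS_plus_pos: "is_SOS_plus d p \<Longrightarrow> \<exists>e>0. \<forall>z. p z \<ge> e"
  unfolding is_SOS_plus_def using SOS_nonneg by fastforce

theorem theorem1:
  fixes f :: "real^'n \<Rightarrow> real^'n"
    and g :: "'m::finite \<Rightarrow> real^'n \<Rightarrow> real^'n"
    and X :: "(real^'n) set"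
    and Phi :: "real^'n \<Rightarrow> real^'N::finite"
    and J :: "real^'n \<Rightarrow> real^'n^'N"
    and LPhi cx cu rho cstar :: real
    and A :: "real^'N^'N" and B0 :: "real^'m^'N" and B :: "'m \<Rightarrow> real^'N^'N"
    and alpha beta :: nat
    and P :: "real^'N^'N"
    and L :: "real^'N \<Rightarrow> real^'N^'m"
    and tau :: "real^'N \<Rightarrow> real"
  assumes f0: "f 0 = 0"
    and Xcomp: "compact X"
    and Phi_deriv: "\<forall>x. (Phi has_derivative (\<lambda>h. J x *v h)) (at x)"
    and J_cont: "continuous_on UNIV J"
    and Phi0: "Phi 0 = 0"
    and LPhi_pos: "LPhi > 0"
    and Phi_bounds: "\<forall>x\<in>X. norm x \<le> norm (Phi x) \<and> norm (Phi x) \<le> LPhi * norm x"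
    and cx_pos: "cx > 0" and cu_pos: "cu > 0"
    and res_bound: "\<forall>x\<in>X. \<forall>u. norm (residual f g Phi J A B0 B x u)
                                  \<le> cx * norm (Phi x) + cu * norm u"
    and alpha_ge: "alpha \<ge> 1" "alpha \<ge> beta"
    and P_pd: "pos_def_sym P"
    and L_poly: "\<forall>i j. mpoly_deg (2 * alpha - 1) (\<lambda>z. L z $ i $ j)"
    and tau_sos: "is_SOS_plus beta tau"
    and rho_pos: "rho > 0"
    and Q_sos: "is_SOS_mat alpha (Qmat A B0 B P L tau rho cx cu)"
    and cstar_max: "cstar > 0" "Omega Phi P cstar \<subseteq> X"
                   "\<forall>c>0. Omega Phi P c \<subseteq> X \<longrightarrow> c \<le> cstar"
  shows "exp_stabilizes
           (\<lambda>x. fc f g x (L (Phi x) *v (matrix_inv P *v Phi x)))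
           (Omega Phi P cstar)"
proof -
  define Pi where "Pi = matrix_inv P"
  have Psym: "transpose P = P" using P_pd unfolding pos_def_sym_def by simp
  have PPi: "P ** Pi = mat 1" and Pisym: "transpose Pi = Pi"
    using pd_inverse[OF P_pd] unfolding Pi_def by auto
  obtain mP where mP: "mP > 0" "\<And>v. v \<bullet> (P *v v) \<ge> mP * (v \<bullet> v)"
    using pd_lower[of P] P_pd unfolding pos_def_sym_def by blast
  obtain K where K: "K > 0" "\<And>v. norm (P *v v) \<le> norm v * K"
    using bounded_linear.pos_bounded[OF matrix_vector_mul_bounded_linear[of P]] by blast
  obtain K2 where K2: "K2 > 0" "\<And>v. norm (Pi *v v) \<le> norm v * K2"
    using bounded_linear.pos_bounded[OF matrix_vector_mul_bounded_linear[of Pi]] by blast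
  obtain eps where eps: "eps > 0" "\<And>z. tau z \<ge> eps"
    using SOS_plus_pos[OF tau_sos] by blast
  define k where "k = rho / K"
  have kpos: "k > 0" unfolding k_def using rho_pos K by simp
  define C where "C = K\<^sup>2 * K2 * LPhi\<^sup>2 / mP"
  have Cnn: "C \<ge> 0" unfolding C_def using mP K2 by simp
  let ?F = "\<lambda>x. fc f g x (L (Phi x) *v (matrix_inv P *v Phi x))"
  have apos: "sqrt C + 1 > 0" using real_sqrt_ge_zero[OF Cnn] by linarith
  have bpos: "k / 2 > 0" using kpos by simp
  have main: "\<forall>xh\<in>Omega Phi P cstar. \<forall>x :: real \<Rightarrow> real^'n.
        (x 0 = xh \<and> (\<forall>t\<ge>0. (x has_vector_derivative ?F (x t)) (at t within {0..})))
        \<longrightarrow> (\<forall>t\<ge>0. norm (x t) \<le> (sqrt C + 1) * norm xh * exp (- (k / 2) * t))"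
  proof (intro ballI allI impI)
    fix xh and x :: "real \<Rightarrow> real^'n" and t :: real
    assume xh: "xh \<in> Omega Phi P cstar"
      and sol: "x 0 = xh \<and> (\<forall>t\<ge>0. (x has_vector_derivative ?F (x t)) (at t within {0..}))"
      and t: "t \<ge> 0"
    define ph where "ph s = Phi (x s)" for s
    define vv where "vv s = Pi *v ph s" for s
    define V where "V s = ph s \<bullet> vv s" for s
    define D where "D s = 2 * (vv s \<bullet> (J (x s) *v ?F (x s)))" for s
    have phv: "ph s = P *v vv s" for s
      unfolding vv_def by (simp add: matrix_vector_mul_assoc PPi)
    have deriv: "(V has_real_derivative D s) (at s within {0..})" if s: "s \<ge> 0" for s
    proof -
      have dx: "(x has_derivative (\<lambda>h. h *\<^sub>R ?F (x s))) (at s within {0..})"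
        using sol s unfolding has_vector_derivative_def by blast
      have dPhi: "(Phi has_derivative (\<lambda>h. J (x s) *v h)) (at (x s) within x ` {0..})"
        using Phi_deriv by (blast intro: has_derivative_at_withinI)
      have dph: "(ph has_derivative (\<lambda>h. J (x s) *v (h *\<^sub>R ?F (x s)))) (at s within {0..})"
        unfolding ph_def by (rule has_derivative_in_compose[OF dx dPhi])
      have dvv: "(vv has_derivative (\<lambda>h. Pi *v (J (x s) *v (h *\<^sub>R ?F (x s))))) (at s within {0..})"
        unfolding vv_def by (rule bounded_linear.has_derivative[OF matrix_vector_mul_bounded_linear dph])
      have dV: "(V has_derivative (\<lambda>h. ph s \<bullet> (Pi *v (J (x s) *v (h *\<^sub>R ?F (x s))))
                 + (J (x s) *v (h *\<^sub>R ?F (x s))) \<bullet> vv s)) (at s within {0..})"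
        unfolding V_def by (rule has_derivative_inner[OF dph dvv])
      show ?thesis unfolding has_field_derivative_def
      proof (rule has_derivative_eq_rhs[OF dV], rule ext)
        fix h :: real
        have "ph s \<bullet> (Pi *v (J (x s) *v (h *\<^sub>R ?F (x s)))) = vv s \<bullet> (J (x s) *v (h *\<^sub>R ?F (x s)))"
          using sym_inner[OF Pisym] unfolding vv_def by simp
        then show "ph s \<bullet> (Pi *v (J (x s) *v (h *\<^sub>R ?F (x s)))) + (J (x s) *v (h *\<^sub>R ?F (x s))) \<bullet> vv s
           = D s * h"
          unfolding D_def by (simp add: matrix_vector_mult_scaleR inner_commute)
      qed
    qed
    have bound: "D s \<le> - rho * (vv s \<bullet> vv s)" if "x s \<in> X" for s
    proof -
      have "2 * (vv s \<bullet> (J (x s) *v ?F (x s))) \<le> - rho * (vv s \<bullet> vv s)"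
      proof (rule pointwise_decay[OF Psym phv _ _ cx_pos cu_pos Q_sos])
        show "tau (ph s) > 0" using eps(2)[of "ph s"] eps(1) by simp
        have "norm (residual f g Phi J A B0 B (x s) (L (ph s) *v vv s)) \<le> cx * norm (Phi (x s)) + cu * norm (L (ph s) *v vv s)"
          using res_bound that by blast
        then show "norm (J (x s) *v ?F (x s) - A *v ph s - B0 *v (L (ph s) *v vv s) -
          Btilde A B *v kron_vec (L (ph s) *v vv s) (ph s)) \<le> cx * norm (ph s) + cu * norm (L (ph s) *v vv s)"
          unfolding residual_def ph_def vv_def Pi_def by simp
      qed
      then show ?thesis unfolding D_def .
    qed
    have VleK: "V s \<le> K * (vv s \<bullet> vv s)" for s
    proof -
      have "V s = (P *v vv s) \<bullet> vv s" unfolding V_def phv ..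
      also have "\<dots> \<le> norm (P *v vv s) * norm (vv s)" by (rule norm_cauchy_schwarz)
      also have "\<dots> \<le> norm (vv s) * K * norm (vv s)" using K(2) by (simp add: mult_right_mono)
      finally show ?thesis by (simp add: power2_norm_eq_inner[symmetric] power2_eq_square mult_ac)
    qed
    have Vge: "V s \<ge> mP * (vv s \<bullet> vv s)" for s
      using mP(2)[of "vv s"] unfolding V_def phv by (simp add: inner_commute)
    have V0: "V 0 \<le> cstar"
      using xh sol unfolding Omega_def V_def vv_def ph_def Pi_def by simp
    have inv: "V s \<le> cstar" if "s \<ge> 0" for s
    proof (rule invariance[OF deriv _ V0 that])
      fix s :: real assume s: "s \<ge> 0" and Vs: "V s = cstar"
      have "x s \<in> Omega Phi P cstar" unfolding Omega_def using Vs
        unfolding V_def vv_def ph_def Pi_def by simp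
      then have "x s \<in> X" using cstar_max(2) by blast
      then have "D s \<le> - rho * (vv s \<bullet> vv s)" by (rule bound)
      moreover have "vv s \<noteq> 0" using Vs cstar_max(1) unfolding V_def by auto
      moreover have "vv s \<bullet> vv s > 0" using \<open>vv s \<noteq> 0\<close> by simp
      then have "rho * (vv s \<bullet> vv s) > 0" by (rule mult_pos_pos[OF rho_pos])
      ultimately show "D s < 0" by linarith
    qed
    have inX: "x s \<in> X" if "s \<ge> 0" for s
      using inv[OF that] cstar_max(2) unfolding Omega_def V_def vv_def ph_def Pi_def by blast
    have dec: "D s \<le> - k * V s" if "s \<ge> 0" for s
    proof -
      have "k * V s \<le> k * (K * (vv s \<bullet> vv s))" using VleK kpos by simp
      also have "\<dots> = rho * (vv s \<bullet> vv s)" unfolding k_def using K by simp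
      finally show ?thesis using bound[OF inX[OF that]] by simp
    qed
    have Vt: "V t \<le> V 0 * exp (- k * t)" by (rule exp_decay[OF deriv dec t])
    have xh0: "xh \<in> X" using inX[of 0] sol by simp
    have V0b: "V 0 \<le> K2 * LPhi\<^sup>2 * (norm xh)\<^sup>2"
    proof -
      have "V 0 \<le> norm (ph 0) * norm (vv 0)" unfolding V_def by (rule norm_cauchy_schwarz)
      also have "\<dots> \<le> norm (ph 0) * (norm (ph 0) * K2)" unfolding vv_def using K2(2) by (simp add: mult_left_mono)
      also have "\<dots> = K2 * (norm (ph 0))\<^sup>2" by (simp add: power2_eq_square)
      also have "\<dots> \<le> K2 * (LPhi * norm xh)\<^sup>2"
      proof -
        have "norm (ph 0) \<le> LPhi * norm xh" using Phi_bounds xh0 sol unfolding ph_def by auto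
        then have "(norm (ph 0))\<^sup>2 \<le> (LPhi * norm xh)\<^sup>2" by (rule power_mono) simp
        then show ?thesis using K2(1) by (simp add: mult_left_mono)
      qed
      finally show ?thesis by (simp add: power_mult_distrib mult_ac)
    qed
    have xt: "(norm (x t))\<^sup>2 \<le> K\<^sup>2 / mP * V t"
    proof -
      have "norm (x t) \<le> norm (ph t)" using Phi_bounds inX[OF t] unfolding ph_def by blast
      also have "\<dots> \<le> norm (vv t) * K" unfolding phv using K(2) .
      finally have "(norm (x t))\<^sup>2 \<le> (norm (vv t) * K)\<^sup>2" by (simp add: power_mono)
      also have "\<dots> = K\<^sup>2 * (vv t \<bullet> vv t)" by (simp add: power_mult_distrib power2_norm_eq_inner)
      also have "\<dots> \<le> K\<^sup>2 * (V t / mP)"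
      proof -
        have "vv t \<bullet> vv t \<le> V t / mP" using Vge[of t] mP(1) by (simp add: field_simps mult.commute)
        then show ?thesis by (rule mult_left_mono) simp
      qed
      finally show ?thesis by simp
    qed
    have "(norm (x t))\<^sup>2 \<le> K\<^sup>2 / mP * (V 0 * exp (- k * t))"
    proof -
      have "K\<^sup>2 / mP * V t \<le> K\<^sup>2 / mP * (V 0 * exp (- k * t))"
        using Vt mP(1) by (intro mult_left_mono) auto
      then show ?thesis using xt by linarith
    qed
    also have "\<dots> \<le> K\<^sup>2 / mP * (K2 * LPhi\<^sup>2 * (norm xh)\<^sup>2 * exp (- k * t))"
      using V0b mP by (intro mult_left_mono) auto
    also have "\<dots> = (sqrt C * norm xh * exp (- (k / 2) * t))\<^sup>2"
    proof -
      have e: "(exp (- (k / 2) * t))\<^sup>2 = exp (- k * t)"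
        by (simp add: power2_eq_square exp_add[symmetric])
      have "(sqrt C * norm xh * exp (- (k / 2) * t))\<^sup>2 = C * (norm xh)\<^sup>2 * exp (- k * t)"
        by (simp only: power_mult_distrib e real_sqrt_pow2[OF Cnn])
      moreover have "K\<^sup>2 / mP * (K2 * LPhi\<^sup>2 * (norm xh)\<^sup>2 * exp (- k * t)) = C * (norm xh)\<^sup>2 * exp (- k * t)"
        unfolding C_def by (simp add: mult_ac)
      ultimately show ?thesis by simp
    qed
    finally have sq: "(norm (x t))\<^sup>2 \<le> (sqrt C * norm xh * exp (- (k / 2) * t))\<^sup>2" .
    have "norm (x t) \<le> sqrt C * norm xh * exp (- (k / 2) * t)"
      by (rule power2_le_imp_le[OF sq], intro mult_nonneg_nonneg, simp_all add: Cnn)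
    also have "\<dots> \<le> (sqrt C + 1) * norm xh * exp (- (k / 2) * t)"
      by (intro mult_right_mono) (simp_all add: distrib_right)
    finally show "norm (x t) \<le> (sqrt C + 1) * norm xh * exp (- (k / 2) * t)" .
  qed
  show ?thesis unfolding exp_stabilizes_def
    by (rule exI[of _ "sqrt C + 1"], rule conjI[OF apos], rule exI[of _ "k / 2"], rule conjI[OF bpos], rule main)
qed

end
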